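(* Let $D$ be a metric on $\mathbb R^a$, let $\epsilon>0$, and let $f,g:\{1,\dots,2n\}\to\{1,\dots,s\}$ be labellings, where for a pair of lists $X=(X_1,\dots,X_n)$, $X'=(X'_1,\dots,X'_n)$ we write $f(X_i)$ for $f(i)$ and $f(X'_i)$ for $f(n+i)$ (and likewise for $g$). Let $S\subseteq(\mathbb R^a)^n\times(\mathbb R^a)^n$ be the set of pairs $(X,X')$ satisfying: (1) for all $\alpha,\beta\in\{1,\dots,n\}$, $f(X_\alpha)=f(X_\beta)$ if and only if $X_\alpha$ and $X_\beta$ are connected by an $\epsilon$-path consisting of points from $(X_1,\dots,X_n)$; (2) for all $\alpha,\beta$, $g(X'_\alpha)=g(X'_\beta)$ if and only if $X'_\alpha$ and $X'_\beta$ are connected by an $\epsilon$-path consisting of points from $(X'_1,\dots,X'_n)$; (3) for every $i=1,\dots,n$, if $j$ is the smallest index such that $X_j$ minimises $D(X'_i,X_k)$ over $k=1,\dots,n$, then $f(X'_i)=f(X_j)$; (4) for every $i=1,\dots,n$, if $j$ is the smallest index such that $X'_j$ minimises $D(X_i,X'_k)$ over $k=1,\dots,n$, then $g(X_i)=g(X'_j)$. Then $S$ is a measurable subset of $(\mathbb R^a)^n\times(\mathbb R^a)^n$.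
   Context: An $\epsilon$-path is a sequence of points $(Y_1,\dots,Y_k)$ with $D(Y_l,Y_{l+1})\le\epsilon$ for $l=1,\dots,k-1$. These conditions describe the preimage of $(f,g)$ under the map sending a pair of $n$-point samples to their Voronoi-extended $\epsilon$-neighbourhood (single-linkage) clusterings restricted to the $2n$ points. Measurability is with respect to the Borel $\sigma$-algebra.
   Formalization: The metric D is also assumed Borel measurable as a function of pairs of points, that is, on $\mathbb R^a\times\mathbb R^a$. The statement above fails without it. *)

theory Defs
  imports "HOL-Analysis.Analysis"
begin

definition is_metric :: "('a \<Rightarrow> 'a \<Rightarrow> real) \<Rightarrow> bool" where
  "is_metric D \<longleftrightarrow>
     (\<forall>x y. D x y = 0 \<longleftrightarrow> x = y) \<and>
     (\<forall>x y. D x y = D y x) \<and>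
     (\<forall>x y z. D x z \<le> D x y + D y z)"

definition eps_path :: "('a \<Rightarrow> 'a \<Rightarrow> real) \<Rightarrow> real \<Rightarrow> 'a set \<Rightarrow> 'a list \<Rightarrow> bool" where
  "eps_path D eps P ys \<longleftrightarrow>
     ys \<noteq> [] \<and> set ys \<subseteq> P \<and>
     (\<forall>l. Suc l < length ys \<longrightarrow> D (ys ! l) (ys ! Suc l) \<le> eps)"

definition eps_connected :: "('a \<Rightarrow> 'a \<Rightarrow> real) \<Rightarrow> real \<Rightarrow> 'a set \<Rightarrow> 'a \<Rightarrow> 'a \<Rightarrow> bool" where
  "eps_connected D eps P x y \<longleftrightarrow>
     (\<exists>ys. eps_path D eps P ys \<and> hd ys = x \<and> last ys = y)"

definition first_argmin :: "('a \<Rightarrow> 'a \<Rightarrow> real) \<Rightarrow> nat \<Rightarrow> (nat \<Rightarrow> 'a) \<Rightarrow> 'a \<Rightarrow> nat" where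
  "first_argmin D n Z x = (LEAST j. j < n \<and> (\<forall>k<n. D x (Z j) \<le> D x (Z k)))"

text \<open>The set S. Indices are 0-based: X i (i<n) carries label f i, X' i carries label f (n+i).\<close>
definition clustering_set ::
  "('a \<Rightarrow> 'a \<Rightarrow> real) \<Rightarrow> real \<Rightarrow> nat \<Rightarrow> (nat \<Rightarrow> nat) \<Rightarrow> (nat \<Rightarrow> nat)
    \<Rightarrow> ((nat \<Rightarrow> 'a) \<times> (nat \<Rightarrow> 'a)) set" where
  "clustering_set D eps n f g =
    {(X, X'). X \<in> ({..<n} \<rightarrow>\<^sub>E UNIV) \<and> X' \<in> ({..<n} \<rightarrow>\<^sub>E UNIV) \<and>
      (\<forall>\<alpha><n. \<forall>\<beta><n. f \<alpha> = f \<beta> \<longleftrightarrow> eps_connected D eps (X ` {..<n}) (X \<alpha>) (X \<beta>)) \<and>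
      (\<forall>\<alpha><n. \<forall>\<beta><n. g (n + \<alpha>) = g (n + \<beta>) \<longleftrightarrow>
                        eps_connected D eps (X' ` {..<n}) (X' \<alpha>) (X' \<beta>)) \<and>
      (\<forall>i<n. f (n + i) = f (first_argmin D n X (X' i))) \<and>
      (\<forall>i<n. g i = g (n + first_argmin D n X' (X i)))}"

end

theory Submission
  imports Defs
begin

lemma proj_fst_meas:
  "(\<lambda>p. fst p k) \<in> borel_measurable (PiM {..<n} (\<lambda>_. (borel::'a::topological_space measure)) \<Otimes>\<^sub>M PiM {..<n} (\<lambda>_. (borel::'a measure)))"
proof (cases "k < n")
  case True
  show ?thesis
    by (rule measurable_compose[OF measurable_fst measurable_component_singleton]) (use True in auto)
next
  case False
  have u: "\<forall>w\<in>space (PiM {..<n} (\<lambda>_. (borel::'a measure)) \<Otimes>\<^sub>M PiM {..<n} (\<lambda>_. (borel::'a measure))). fst w k = undefined"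
    using False by (auto simp: space_pair_measure space_PiM PiE_def extensional_def)
  have "((\<lambda>p. fst p k) \<in> borel_measurable (PiM {..<n} (\<lambda>_. (borel::'a measure)) \<Otimes>\<^sub>M PiM {..<n} (\<lambda>_. (borel::'a measure)))) = ((\<lambda>_. undefined::'a) \<in> borel_measurable (PiM {..<n} (\<lambda>_. (borel::'a measure)) \<Otimes>\<^sub>M PiM {..<n} (\<lambda>_. (borel::'a measure))))"
    by (rule measurable_cong) (simp add: u)
  then show ?thesis by simp
qed

lemma proj_snd_meas:
  "(\<lambda>p. snd p k) \<in> borel_measurable (PiM {..<n} (\<lambda>_. (borel::'a::topological_space measure)) \<Otimes>\<^sub>M PiM {..<n} (\<lambda>_. (borel::'a measure)))"
proof (cases "k < n")
  case True
  show ?thesis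
    by (rule measurable_compose[OF measurable_snd measurable_component_singleton]) (use True in auto)
next
  case False
  have u: "\<forall>w\<in>space (PiM {..<n} (\<lambda>_. (borel::'a measure)) \<Otimes>\<^sub>M PiM {..<n} (\<lambda>_. (borel::'a measure))). snd w k = undefined"
    using False by (auto simp: space_pair_measure space_PiM PiE_def extensional_def)
  have "((\<lambda>p. snd p k) \<in> borel_measurable (PiM {..<n} (\<lambda>_. (borel::'a measure)) \<Otimes>\<^sub>M PiM {..<n} (\<lambda>_. (borel::'a measure)))) = ((\<lambda>_. undefined::'a) \<in> borel_measurable (PiM {..<n} (\<lambda>_. (borel::'a measure)) \<Otimes>\<^sub>M PiM {..<n} (\<lambda>_. (borel::'a measure))))"
    by (rule measurable_cong) (simp add: u)
  then show ?thesis by simp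
qed

lemma D_meas:
  fixes D :: "'a::euclidean_space \<Rightarrow> 'a \<Rightarrow> real"
  assumes "case_prod D \<in> borel_measurable borel"
    and "u \<in> borel_measurable M" and "v \<in> borel_measurable M"
  shows "(\<lambda>x. D (u x) (v x)) \<in> borel_measurable M"
proof -
  have "(\<lambda>x. (u x, v x)) \<in> M \<rightarrow>\<^sub>M (borel \<Otimes>\<^sub>M borel)"
    using assms(2,3) by (rule measurable_Pair)
  then have "(\<lambda>x. (u x, v x)) \<in> M \<rightarrow>\<^sub>M borel" by (simp add: borel_prod)
  from measurable_compose[OF this assms(1)] show ?thesis by simp
qed

lemma eps_connected_idx:
  "eps_connected D eps (X ` {..<n}) x y \<longleftrightarrow>
    (\<exists>js. js \<noteq> [] \<and> set js \<subseteq> {..<n} \<and>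
       (\<forall>l. Suc l < length js \<longrightarrow> D (X (js!l)) (X (js!Suc l)) \<le> eps) \<and>
       X (hd js) = x \<and> X (last js) = y)"
proof
  assume "eps_connected D eps (X ` {..<n}) x y"
  then obtain ys where ys: "eps_path D eps (X ` {..<n}) ys" "hd ys = x" "last ys = y"
    unfolding eps_connected_def by blast
  define h where "h = (\<lambda>z. SOME i. i < n \<and> X i = z)"
  have h: "h z < n \<and> X (h z) = z" if "z \<in> set ys" for z
  proof -
    from that ys(1) have "z \<in> X ` {..<n}" unfolding eps_path_def by auto
    then have "\<exists>i. i < n \<and> X i = z" by auto
    then show ?thesis unfolding h_def by (rule someI_ex)
  qed
  have mx: "map X (map h ys) = ys"
    by (simp add: map_idI h)
  let ?js = "map h ys"
  have ne: "ys \<noteq> []" using ys(1) unfolding eps_path_def by auto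
  show "\<exists>js. js \<noteq> [] \<and> set js \<subseteq> {..<n} \<and>
       (\<forall>l. Suc l < length js \<longrightarrow> D (X (js!l)) (X (js!Suc l)) \<le> eps) \<and>
       X (hd js) = x \<and> X (last js) = y"
  proof (intro exI[of _ ?js] conjI)
    show "?js \<noteq> []" using ne by simp
    show "set ?js \<subseteq> {..<n}" using h by auto
    show "\<forall>l. Suc l < length ?js \<longrightarrow> D (X (?js!l)) (X (?js!Suc l)) \<le> eps"
      using ys(1) h unfolding eps_path_def by auto
    show "X (hd ?js) = x" using ne h[of "hd ys"] ys(2) hd_in_set[OF ne] by (simp add: hd_map hd_in_set)
    show "X (last ?js) = y" using ne h[of "last ys"] ys(3) last_in_set[OF ne] by (simp add: last_map last_in_set)
  qed
next
  assume "\<exists>js. js \<noteq> [] \<and> set js \<subseteq> {..<n} \<and>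
       (\<forall>l. Suc l < length js \<longrightarrow> D (X (js!l)) (X (js!Suc l)) \<le> eps) \<and>
       X (hd js) = x \<and> X (last js) = y"
  then obtain js where js: "js \<noteq> []" "set js \<subseteq> {..<n}"
       "\<forall>l. Suc l < length js \<longrightarrow> D (X (js!l)) (X (js!Suc l)) \<le> eps"
       "X (hd js) = x" "X (last js) = y" by blast
  show "eps_connected D eps (X ` {..<n}) x y"
    unfolding eps_connected_def eps_path_def
    using js by (intro exI[of _ "map X js"]) (auto simp: hd_map last_map)
qed

theorem lemma11p2:
  fixes D :: "'a::euclidean_space \<Rightarrow> 'a \<Rightarrow> real"
    and eps :: real and n s :: nat and f g :: "nat \<Rightarrow> nat"
  assumes "is_metric D"
    and "case_prod D \<in> borel_measurable borel"
    and "eps > 0"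
    and "f ` {..<2*n} \<subseteq> {1..s}"
    and "g ` {..<2*n} \<subseteq> {1..s}"
  shows "clustering_set D eps n f g \<in>
           sets (PiM {..<n} (\<lambda>_. borel) \<Otimes>\<^sub>M PiM {..<n} (\<lambda>_. borel))"
proof -
  let ?M = "PiM {..<n} (\<lambda>_. (borel::'a measure)) \<Otimes>\<^sub>M PiM {..<n} (\<lambda>_. (borel::'a measure))"
  note [measurable] = proj_fst_meas proj_snd_meas
  have Dm[measurable]: "(\<lambda>p. D (fst p a) (fst p b)) \<in> borel_measurable ?M"
     "(\<lambda>p. D (snd p a) (snd p b)) \<in> borel_measurable ?M"
     "(\<lambda>p. D (snd p a) (fst p b)) \<in> borel_measurable ?M"
     "(\<lambda>p. D (fst p a) (snd p b)) \<in> borel_measurable ?M" for a b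
    by (rule D_meas[OF assms(2)]; measurable)+
  have D0: "D x y = 0 \<longleftrightarrow> x = y" for x y using assms(1) unfolding is_metric_def by blast
  have eqm1[measurable]: "Measurable.pred ?M (\<lambda>p. fst p a = fst p b)" for a b
    by (subst D0[symmetric]) measurable
  have eqm2[measurable]: "Measurable.pred ?M (\<lambda>p. snd p a = snd p b)" for a b
    by (subst D0[symmetric]) measurable
  have fa1: "(\<lambda>p. first_argmin D n (fst p) (snd p i)) \<in> ?M \<rightarrow>\<^sub>M count_space UNIV" for i
    unfolding first_argmin_def by (rule measurable_Least) measurable
  have fa2: "(\<lambda>p. first_argmin D n (snd p) (fst p i)) \<in> ?M \<rightarrow>\<^sub>M count_space UNIV" for i
    unfolding first_argmin_def by (rule measurable_Least) measurable
  have c1: "Measurable.pred ?M (\<lambda>p. f (n + i) = f (first_argmin D n (fst p) (snd p i)))" for i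
    by (rule pred_count_space_const2, rule measurable_compose[OF fa1[of i]]) simp
  have c2: "Measurable.pred ?M (\<lambda>p. g i = g (n + first_argmin D n (snd p) (fst p i)))" for i
    by (rule pred_count_space_const2, rule measurable_compose[OF fa2[of i]]) simp
  have ec1: "Measurable.pred ?M (\<lambda>p. eps_connected D eps (fst p ` {..<n}) (fst p a) (fst p b))" for a b
    unfolding eps_connected_idx by measurable
  have ec2: "Measurable.pred ?M (\<lambda>p. eps_connected D eps (snd p ` {..<n}) (snd p a) (snd p b))" for a b
    unfolding eps_connected_idx by measurable
  note [measurable] = c1 c2 ec1 ec2
  have "Measurable.pred ?M (\<lambda>p.
      (\<forall>\<alpha><n. \<forall>\<beta><n. f \<alpha> = f \<beta> \<longleftrightarrow> eps_connected D eps (fst p ` {..<n}) (fst p \<alpha>) (fst p \<beta>)) \<and>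
      (\<forall>\<alpha><n. \<forall>\<beta><n. g (n + \<alpha>) = g (n + \<beta>) \<longleftrightarrow>
                        eps_connected D eps (snd p ` {..<n}) (snd p \<alpha>) (snd p \<beta>)) \<and>
      (\<forall>i<n. f (n + i) = f (first_argmin D n (fst p) (snd p i))) \<and>
      (\<forall>i<n. g i = g (n + first_argmin D n (snd p) (fst p i))))"
    by measurable
  then have "{p \<in> space ?M. 
      (\<forall>\<alpha><n. \<forall>\<beta><n. f \<alpha> = f \<beta> \<longleftrightarrow> eps_connected D eps (fst p ` {..<n}) (fst p \<alpha>) (fst p \<beta>)) \<and>
      (\<forall>\<alpha><n. \<forall>\<beta><n. g (n + \<alpha>) = g (n + \<beta>) \<longleftrightarrow>
                        eps_connected D eps (snd p ` {..<n}) (snd p \<alpha>) (snd p \<beta>)) \<and>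
      (\<forall>i<n. f (n + i) = f (first_argmin D n (fst p) (snd p i))) \<and>
      (\<forall>i<n. g i = g (n + first_argmin D n (snd p) (fst p i)))} \<in> sets ?M"
    unfolding Measurable.pred_def .
  also have "{p \<in> space ?M. 
      (\<forall>\<alpha><n. \<forall>\<beta><n. f \<alpha> = f \<beta> \<longleftrightarrow> eps_connected D eps (fst p ` {..<n}) (fst p \<alpha>) (fst p \<beta>)) \<and>
      (\<forall>\<alpha><n. \<forall>\<beta><n. g (n + \<alpha>) = g (n + \<beta>) \<longleftrightarrow>
                        eps_connected D eps (snd p ` {..<n}) (snd p \<alpha>) (snd p \<beta>)) \<and>
      (\<forall>i<n. f (n + i) = f (first_argmin D n (fst p) (snd p i))) \<and>
      (\<forall>i<n. g i = g (n + first_argmin D n (snd p) (fst p i)))} = clustering_set D eps n f g"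
    unfolding clustering_set_def by (auto simp: space_pair_measure space_PiM)
  finally show ?thesis .
qed

end
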